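(* Let $\mathcal E$ be an exchangeability system for a noncommutative probability space $(\mathcal A,\phi)$, let $(X_{i,j})_{i\in[m],\,j\in[n_i]}\subseteq\mathcal A$, $n=n_1+\dots+n_m$, and $\pi\in\Pi_m$. Then $$K_\pi\Big(\prod_{j=1}^{n_1}X_{1,j},\dots,\prod_{j=1}^{n_m}X_{m,j}\Big)=\sum_{\substack{\sigma\in\Pi_n\\ \sigma\vee\tilde{\hat0}_m=\tilde\pi}}K_\sigma(X_{1,1},X_{1,2},\dots,X_{m,n_m}),$$ where products are taken in increasing order of $j$.
   Context: A noncommutative probability space is a pair $(\mathcal A,\phi)$ of a complex unital algebra $\mathcal A$ and a unital linear functional $\phi$. An exchangeability system $\mathcal E$ for $(\mathcal A,\phi)$ consists of a noncommutative probability space $(\mathcal U,\tilde\phi)$ and a family $(\iota_k)_{k\in\mathbb N}$ of embeddings (injective unital algebra homomorphisms) $\iota_k:\mathcal A\to\mathcal A_k\subseteq\mathcal U$ with $\tilde\phi\circ\iota_k=\phi$; write $X^{(k)}=\iota_k(X)$. It is required that for all $X_1,\dots,X_n\in\mathcal A$, indices $i_1,\dots,i_n\in\mathbb N$ and bijections $\sigma$ of $\mathbb N$, $\tilde\phi(X_1^{(i_1)}\cdots X_n^{(i_n)})=\tilde\phi(X_1^{(\sigma(i_1))}\cdots X_n^{(\sigma(i_n))})$; this value depends only on the kernel of $j\mapsto i_j$ and for a partition $\pi$ is denoted $\phi_\pi(X_1,\dots,X_n)$. $\Pi_n$ is the lattice of set partitions of $[n]$ under refinement with Möbius function $\mu$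 and join $\vee$; $K_\pi=\sum_{\sigma\le\pi}\phi_\sigma\,\mu(\sigma,\pi)$. Identify $[n]$ with $\{(i,j):i\in[m],j\in[n_i]\}$ in lexicographic order. Each $\pi\in\Pi_m$ induces $\tilde\pi\in\Pi_n$ with blocks $\{(i,j):i\in B,j\in[n_i]\}$ for $B\in\pi$; $\hat0_m$ is the partition of $[m]$ into singletons. *)

theory Defs
  imports Complex_Main "HOL-Library.Disjoint_Sets"
begin

definition complex_algebra :: "(complex \<Rightarrow> 'a::ring_1 \<Rightarrow> 'a) \<Rightarrow> bool" where
  "complex_algebra sA \<longleftrightarrow> module sA \<and>
     (\<forall>c x y. sA c (x * y) = sA c x * y \<and> sA c (x * y) = x * sA c y)"

definition ncps :: "(complex \<Rightarrow> 'a::ring_1 \<Rightarrow> 'a) \<Rightarrow> ('a \<Rightarrow> complex) \<Rightarrow> bool" where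
  "ncps sA phi \<longleftrightarrow> complex_algebra sA \<and>
     (\<forall>x y. phi (x + y) = phi x + phi y) \<and> (\<forall>c x. phi (sA c x) = c * phi x) \<and> phi 1 = 1"

definition alg_embedding :: "(complex \<Rightarrow> 'a::ring_1 \<Rightarrow> 'a) \<Rightarrow> (complex \<Rightarrow> 'u::ring_1 \<Rightarrow> 'u)
    \<Rightarrow> ('a \<Rightarrow> 'u) \<Rightarrow> bool" where
  "alg_embedding sA sU f \<longleftrightarrow> inj f \<and> f 1 = 1 \<and>
     (\<forall>x y. f (x + y) = f x + f y) \<and> (\<forall>x y. f (x * y) = f x * f y) \<and>
     (\<forall>c x. f (sA c x) = sU c (f x))"

text \<open>Exchangeability system (U, phit, iota) for (A, phi); X^(k) = iota k X.\<close>
definition exch_system :: "(complex \<Rightarrow> 'a::ring_1 \<Rightarrow> 'a) \<Rightarrow> ('a \<Rightarrow> complex)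
    \<Rightarrow> (complex \<Rightarrow> 'u::ring_1 \<Rightarrow> 'u) \<Rightarrow> ('u \<Rightarrow> complex) \<Rightarrow> (nat \<Rightarrow> 'a \<Rightarrow> 'u) \<Rightarrow> bool" where
  "exch_system sA phi sU phit iota \<longleftrightarrow> ncps sA phi \<and> ncps sU phit \<and>
     (\<forall>k. alg_embedding sA sU (iota k) \<and> (\<forall>x. phit (iota k x) = phi x)) \<and>
     (\<forall>(xs::'a list) (is::nat list) (s::nat \<Rightarrow> nat). length is = length xs \<longrightarrow> bij s \<longrightarrow>
        phit (prod_list (map (\<lambda>j. iota (is ! j) (xs ! j)) [0..<length xs])) =
        phit (prod_list (map (\<lambda>j. iota (s (is ! j)) (xs ! j)) [0..<length xs])))"

definition Pi_part :: "nat \<Rightarrow> nat set set set" where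
  "Pi_part n = {P. partition_on {0..<n} P}"

definition refines :: "'a set set \<Rightarrow> 'a set set \<Rightarrow> bool" where
  "refines s p \<longleftrightarrow> (\<forall>B\<in>s. \<exists>C\<in>p. B \<subseteq> C)"

lemma refines_refl: "refines s s"
  unfolding refines_def by blast

lemma refines_trans: "refines a b \<Longrightarrow> refines b c \<Longrightarrow> refines a c"
  unfolding refines_def by (meson order_trans)

lemma finite_Pi_part: "finite (Pi_part n)"
proof -
  have "Pi_part n \<subseteq> Pow (Pow {0..<n})"
    unfolding Pi_part_def partition_on_def by auto
  thus ?thesis by (rule finite_subset) simp
qed

definition join_part :: "nat \<Rightarrow> nat set set \<Rightarrow> nat set set \<Rightarrow> nat set set" where
  "join_part n s t = (THE r. r \<in> Pi_part n \<and> refines s r \<and> refines t r \<and>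
      (\<forall>r'\<in>Pi_part n. refines s r' \<and> refines t r' \<longrightarrow> refines r r'))"

function mobius :: "nat \<Rightarrow> nat set set \<Rightarrow> nat set set \<Rightarrow> int" where
  "mobius n s p =
    (if s = p then 1
     else if s \<in> Pi_part n \<and> p \<in> Pi_part n \<and> refines s p then
       - (\<Sum>r\<in>{r\<in>Pi_part n. refines s r \<and> refines r p \<and> \<not> refines p r}. mobius n s r)
     else 0)"
  by pat_completeness auto
termination
proof (relation "measure (\<lambda>(n, s, p). card {r\<in>Pi_part n. refines s r \<and> refines r p})")
  show "wf (measure (\<lambda>(n, s, p). card {r\<in>Pi_part n. refines s r \<and> refines r p}))" by simp
next
  fix n s p r
  assume a: "\<not> s = p" "s \<in> Pi_part n \<and> p \<in> Pi_part n \<and> refines s p"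
     and r: "r \<in> {r\<in>Pi_part n. refines s r \<and> refines r p \<and> \<not> refines p r}"
  have sub: "{r'\<in>Pi_part n. refines s r' \<and> refines r' r} \<subseteq> {r'\<in>Pi_part n. refines s r' \<and> refines r' p}"
    using r refines_trans by blast
  have "p \<in> {r'\<in>Pi_part n. refines s r' \<and> refines r' p}" using a refines_refl by blast
  moreover have "p \<notin> {r'\<in>Pi_part n. refines s r' \<and> refines r' r}" using r by blast
  ultimately have "{r'\<in>Pi_part n. refines s r' \<and> refines r' r} \<subset> {r'\<in>Pi_part n. refines s r' \<and> refines r' p}"
    using sub by blast
  hence "card {r'\<in>Pi_part n. refines s r' \<and> refines r' r} < card {r'\<in>Pi_part n. refines s r' \<and> refines r' p}"
    by (rule psubset_card_mono[rotated]) (rule finite_subset[OF _ finite_Pi_part], blast)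
  thus "((n, s, r), n, s, p) \<in> measure (\<lambda>(n, s, p). card {r\<in>Pi_part n. refines s r \<and> refines r p})"
    by simp
qed

declare mobius.simps[simp del]

text \<open>Canonical index function whose kernel is the partition p: each position j
  is labelled by the least element of its block.\<close>
definition part_label :: "nat set set \<Rightarrow> nat \<Rightarrow> nat" where
  "part_label p j = Min {k. \<exists>B\<in>p. j \<in> B \<and> k \<in> B}"

text \<open>phi_p(X_1,...,X_n) = phit(X_1^(i_1) ... X_n^(i_n)) where ker i = p
  (independent of the choice of i by exchangeability).\<close>
definition phi_part :: "('u::ring_1 \<Rightarrow> complex) \<Rightarrow> (nat \<Rightarrow> 'a \<Rightarrow> 'u) \<Rightarrow> nat set set \<Rightarrow> 'a list \<Rightarrow> complex" where
  "phi_part phit iota p xs =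
     phit (prod_list (map (\<lambda>j. iota (part_label p j) (xs ! j)) [0..<length xs]))"

definition K_part :: "('u::ring_1 \<Rightarrow> complex) \<Rightarrow> (nat \<Rightarrow> 'a \<Rightarrow> 'u) \<Rightarrow> nat set set \<Rightarrow> 'a list \<Rightarrow> complex" where
  "K_part phit iota p xs =
     (\<Sum>s\<in>{s\<in>Pi_part (length xs). refines s p}.
        phi_part phit iota s xs * of_int (mobius (length xs) s p))"

text \<open>Position of (i,j) in lexicographic order is offset ns i + j.\<close>
definition offset :: "nat list \<Rightarrow> nat \<Rightarrow> nat" where
  "offset ns i = sum_list (take i ns)"

definition tilde :: "nat list \<Rightarrow> nat set set \<Rightarrow> nat set set" where
  "tilde ns p = (\<lambda>B. \<Union>i\<in>B. {offset ns i ..< offset ns i + ns ! i}) ` p"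

definition hat0 :: "nat \<Rightarrow> nat set set" where
  "hat0 m = (\<lambda>i. {i}) ` {0..<m}"

end

theory Submission
  imports Defs
begin

definition prel :: "'a set set \<Rightarrow> ('a \<times> 'a) set" where
  "prel P = {(x, y). \<exists>B\<in>P. x \<in> B \<and> y \<in> B}"

lemma prel_mono: assumes "refines s r" shows "prel s \<subseteq> prel r"
proof
  fix z assume "z \<in> prel s"
  then obtain x y B where z: "z = (x, y)" "B \<in> s" "x \<in> B" "y \<in> B" unfolding prel_def by blast
  then obtain C where "C \<in> r" "B \<subseteq> C" using assms unfolding refines_def by blast
  thus "z \<in> prel r" using z unfolding prel_def by blast
qed

lemma part_block_unique:
  assumes "partition_on A P" "B \<in> P" "C \<in> P" "x \<in> B" "x \<in> C" shows "B = C"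
  using assms unfolding partition_on_def disjoint_def by blast

lemma part_antisym:
  assumes "partition_on A P" "partition_on A' Q" "refines P Q" "refines Q P"
  shows "P = Q"
proof -
  have *: "B \<in> Q" if h: "partition_on A P" "partition_on A' Q" "refines P Q" "refines Q P" "B \<in> P"
    for A A' P Q B
  proof -
    obtain C where C: "C \<in> Q" "B \<subseteq> C" using h unfolding refines_def by blast
    obtain B' where B': "B' \<in> P" "C \<subseteq> B'" using h C unfolding refines_def by blast
    have "B \<noteq> {}" using h unfolding partition_on_def by blast
    then obtain x where "x \<in> B" by blast
    hence "B = B'" using part_block_unique[OF h(1) \<open>B \<in> P\<close> B'(1)] C B' by blast
    hence "C = B" using C B' by (intro subset_antisym) auto
    thus ?thesis using C by simp
  qed
  show ?thesis using *[OF assms] *[OF assms(2,1,4,3)] by blast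
qed

lemma join_exists:
  assumes s: "partition_on A s" and t: "partition_on A t"
  shows "\<exists>j. partition_on A j \<and> refines s j \<and> refines t j \<and>
     (\<forall>r. partition_on A r \<and> refines s r \<and> refines t r \<longrightarrow> refines j r)"
proof -
  define Q where "Q = (prel s \<union> prel t)\<^sup>+"
  have es: "equiv A (prel s)" and et: "equiv A (prel t)"
    using equiv_partition_on[OF s] equiv_partition_on[OF t] unfolding prel_def by auto
  have eq: "equiv A Q"
  proof (rule equivI)
    have "prel s \<union> prel t \<subseteq> A \<times> A" using es et by (auto dest: equiv_type)
    thus "Q \<subseteq> A \<times> A" unfolding Q_def by (rule trancl_subset_Sigma)
    have "refl_on A (prel s)" using es by (auto elim: equivE)
    hence "\<And>x. x \<in> A \<Longrightarrow> (x, x) \<in> Q" unfolding Q_def refl_on_def by blast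
    thus "refl_on A Q" using \<open>Q \<subseteq> A \<times> A\<close> unfolding refl_on_def by blast
    show "sym Q" unfolding Q_def using es et
      by (intro sym_trancl sym_Un) (auto elim: equivE)
    show "trans Q" unfolding Q_def by simp
  qed
  define j where "j = A // Q"
  have pj: "partition_on A j" unfolding j_def by (rule partition_on_quotient[OF eq])
  have ub: "refines u j" if u: "partition_on A u" "prel u \<subseteq> Q" for u
    unfolding refines_def
  proof
    fix B assume "B \<in> u"
    hence "B \<noteq> {}" "B \<subseteq> A" using u unfolding partition_on_def by auto
    then obtain x where x: "x \<in> B" "x \<in> A" by blast
    have "Q `` {x} \<in> j" unfolding j_def using x(2) by (rule quotientI)
    moreover have "B \<subseteq> Q `` {x}" using x \<open>B \<in> u\<close> u(2) unfolding prel_def by blast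
    ultimately show "\<exists>C\<in>j. B \<subseteq> C" by blast
  qed
  have "refines s j" by (rule ub[OF s]) (auto simp: Q_def)
  moreover have "refines t j" by (rule ub[OF t]) (auto simp: Q_def)
  moreover have "refines j r" if r: "partition_on A r" "refines s r" "refines t r" for r
  proof -
    have er: "equiv A (prel r)" using equiv_partition_on[OF r(1)] unfolding prel_def by auto
    have "prel s \<subseteq> prel r" "prel t \<subseteq> prel r" using prel_mono[OF r(2)] prel_mono[OF r(3)] by auto
    hence "Q \<subseteq> (prel r)\<^sup>+" unfolding Q_def by (intro trancl_mono_subset) blast
    also have "\<dots> = prel r" using er by (auto elim: equivE)
    finally have Qr: "Q \<subseteq> prel r" .
    show ?thesis unfolding refines_def
    proof
      fix D assume "D \<in> j"
      then obtain x where x: "x \<in> A" "D = Q `` {x}" unfolding j_def quotient_def by blast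
      then obtain C where C: "C \<in> r" "x \<in> C" using r(1) unfolding partition_on_def by blast
      have "D \<subseteq> C"
      proof
        fix y assume "y \<in> D"
        hence "(x, y) \<in> prel r" using x Qr by blast
        then obtain C' where "C' \<in> r" "x \<in> C'" "y \<in> C'" unfolding prel_def by blast
        thus "y \<in> C" using part_block_unique[OF r(1) C(1) \<open>C' \<in> r\<close> C(2)] by blast
      qed
      thus "\<exists>C\<in>r. D \<subseteq> C" using C by blast
    qed
  qed
  ultimately show ?thesis using pj by blast
qed

lemma join_part_props:
  assumes "s \<in> Pi_part n" "t \<in> Pi_part n"
  shows "join_part n s t \<in> Pi_part n \<and> refines s (join_part n s t) \<and> refines t (join_part n s t) \<and>
      (\<forall>r'\<in>Pi_part n. refines s r' \<and> refines t r' \<longrightarrow> refines (join_part n s t) r')"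
proof -
  obtain j where j: "partition_on {0..<n} j \<and> refines s j \<and> refines t j \<and>
     (\<forall>r. partition_on {0..<n} r \<and> refines s r \<and> refines t r \<longrightarrow> refines j r)"
    using join_exists assms unfolding Pi_part_def by blast
  have "\<exists>!r. r \<in> Pi_part n \<and> refines s r \<and> refines t r \<and>
      (\<forall>r'\<in>Pi_part n. refines s r' \<and> refines t r' \<longrightarrow> refines r r')"
  proof (rule ex1I[of _ j])
    show "j \<in> Pi_part n \<and> refines s j \<and> refines t j \<and>
      (\<forall>r'\<in>Pi_part n. refines s r' \<and> refines t r' \<longrightarrow> refines j r')" using j unfolding Pi_part_def by blast
  next
    fix r assume "r \<in> Pi_part n \<and> refines s r \<and> refines t r \<and>
      (\<forall>r'\<in>Pi_part n. refines s r' \<and> refines t r' \<longrightarrow> refines r r')"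
    hence "partition_on {0..<n} r" "refines r j" "refines j r" using j unfolding Pi_part_def by auto
    thus "r = j" using j by (intro part_antisym[of "{0..<n}" r "{0..<n}" j]) auto
  qed
  from theI'[OF this] show ?thesis unfolding join_part_def .
qed


lemma Pi_antisym: "a \<in> Pi_part N \<Longrightarrow> b \<in> Pi_part N \<Longrightarrow> refines a b \<Longrightarrow> refines b a \<Longrightarrow> a = b"
  unfolding Pi_part_def by (intro part_antisym[of "{0..<N}" a "{0..<N}" b]) auto

lemma mobius_sum:
  assumes "s \<in> Pi_part N" "r \<in> Pi_part N" "refines s r"
  shows "(\<Sum>t\<in>{t\<in>Pi_part N. refines s t \<and> refines t r}. mobius N s t) = (if s = r then 1 else 0)"
proof (cases "s = r")
  case True
  have "{t\<in>Pi_part N. refines s t \<and> refines t r} = {r}"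
    using True assms Pi_antisym refines_refl by blast
  thus ?thesis using True by (simp add: mobius.simps)
next
  case False
  define S' where "S' = {t\<in>Pi_part N. refines s t \<and> refines t r \<and> \<not> refines r t}"
  have eq: "{t\<in>Pi_part N. refines s t \<and> refines t r} = insert r S'"
    unfolding S'_def using assms Pi_antisym refines_refl by blast
  have "r \<notin> S'" unfolding S'_def using refines_refl by blast
  moreover have "finite S'" unfolding S'_def using finite_Pi_part by auto
  ultimately have "(\<Sum>t\<in>insert r S'. mobius N s t) = mobius N s r + (\<Sum>t\<in>S'. mobius N s t)"
    by simp
  also have "mobius N s r = - (\<Sum>t\<in>S'. mobius N s t)"
    using False assms unfolding S'_def by (subst mobius.simps) simp
  finally show ?thesis using eq False by simp
qed

lemma phi_inv:
  assumes "r \<in> Pi_part (length xs)"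
  shows "(\<Sum>t\<in>{t\<in>Pi_part (length xs). refines t r}. K_part phit iota t xs) = phi_part phit iota r xs"
proof -
  define N where "N = length xs"
  define D where "D = {t\<in>Pi_part N. refines t r}"
  have fD: "finite D" unfolding D_def using finite_Pi_part by auto
  have "(\<Sum>t\<in>D. K_part phit iota t xs) =
     (\<Sum>t\<in>D. \<Sum>s\<in>{s\<in>D. refines s t}. phi_part phit iota s xs * of_int (mobius N s t))"
    unfolding K_part_def N_def[symmetric]
  proof (rule sum.cong[OF refl], rule sum.cong)
    fix t assume "t \<in> D"
    thus "{s \<in> Pi_part N. refines s t} = {s\<in>D. refines s t}" unfolding D_def
      using refines_trans by blast
  qed simp
  also have "\<dots> = (\<Sum>s\<in>D. \<Sum>t\<in>{t\<in>D. refines s t}. phi_part phit iota s xs * of_int (mobius N s t))"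
    using sum.swap_restrict[OF fD fD] by simp
  also have "\<dots> = (\<Sum>s\<in>D. phi_part phit iota s xs * (if s = r then 1 else 0))"
  proof (rule sum.cong[OF refl])
    fix s assume s: "s \<in> D"
    have "{t\<in>D. refines s t} = {t\<in>Pi_part N. refines s t \<and> refines t r}" unfolding D_def by blast
    hence "(\<Sum>t\<in>{t\<in>D. refines s t}. phi_part phit iota s xs * of_int (mobius N s t)) =
        phi_part phit iota s xs * of_int (\<Sum>t\<in>{t\<in>Pi_part N. refines s t \<and> refines t r}. mobius N s t)"
      by (simp add: sum_distrib_left)
    also have "\<dots> = phi_part phit iota s xs * (if s = r then 1 else 0)"
      using s assms mobius_sum[of s N r] unfolding D_def N_def by simp
    finally show "(\<Sum>t\<in>{t\<in>D. refines s t}. phi_part phit iota s xs * of_int (mobius N s t)) =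
        phi_part phit iota s xs * (if s = r then 1 else 0)" .
  qed
  also have "\<dots> = phi_part phit iota r xs"
  proof -
    have "r \<in> D" unfolding D_def using assms refines_refl N_def by blast
    thus ?thesis using fD by (simp add: if_distrib sum.delta' cong: if_cong)
  qed
  finally show ?thesis unfolding D_def N_def .
qed

lemma down_unique:
  fixes a b :: "nat set set \<Rightarrow> 'b::ab_group_add"
  assumes h: "\<forall>p\<in>Pi_part N. (\<Sum>s\<in>{s\<in>Pi_part N. refines s p}. a s) = (\<Sum>s\<in>{s\<in>Pi_part N. refines s p}. b s)"
  shows "p \<in> Pi_part N \<Longrightarrow> a p = b p"
proof (induction p rule: measure_induct_rule[of "\<lambda>p. card {s\<in>Pi_part N. refines s p}"])
  case (less p)
  define S' where "S' = {s\<in>Pi_part N. refines s p \<and> s \<noteq> p}"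
  have fS: "finite S'" unfolding S'_def using finite_Pi_part by auto
  have eq: "{s\<in>Pi_part N. refines s p} = insert p S'" "p \<notin> S'"
    unfolding S'_def using less.prems refines_refl by auto
  have "a s = b s" if "s \<in> S'" for s
  proof (rule less.IH)
    show "s \<in> Pi_part N" using that unfolding S'_def by blast
    have "{s'\<in>Pi_part N. refines s' s} \<subseteq> {s\<in>Pi_part N. refines s p}"
      using that refines_trans unfolding S'_def by blast
    moreover have "p \<notin> {s'\<in>Pi_part N. refines s' s}"
      using that less.prems Pi_antisym unfolding S'_def by blast
    moreover have "p \<in> {s\<in>Pi_part N. refines s p}" using less.prems refines_refl by blast
    ultimately have "{s'\<in>Pi_part N. refines s' s} \<subset> {s\<in>Pi_part N. refines s p}" by blast
    thus "card {s'\<in>Pi_part N. refines s' s} < card {s\<in>Pi_part N. refines s p}"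
      by (intro psubset_card_mono) (auto intro: finite_subset[OF _ finite_Pi_part])
  qed
  hence "sum a S' = sum b S'" by (rule sum.cong[OF refl])
  moreover have "a p + sum a S' = b p + sum b S'"
  proof -
    have "(\<Sum>s\<in>{s\<in>Pi_part N. refines s p}. a s) = (\<Sum>s\<in>{s\<in>Pi_part N. refines s p}. b s)"
      using h less.prems by blast
    thus ?thesis unfolding eq(1) using eq(2) fS by simp
  qed
  ultimately show ?case by simp
qed


definition preim :: "(nat \<Rightarrow> nat) \<Rightarrow> nat \<Rightarrow> nat set \<Rightarrow> nat set" where
  "preim g n B = {k\<in>{0..<n}. g k \<in> B}"

locale surjmap =
  fixes g :: "nat \<Rightarrow> nat" and n m :: nat
  assumes gM: "\<And>k. k < n \<Longrightarrow> g k < m"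
    and gS: "\<And>i. i < m \<Longrightarrow> \<exists>k<n. g k = i"
begin

abbreviation pre :: "nat set \<Rightarrow> nat set" where
  "pre \<equiv> preim g n"

lemma g_pre: "B \<subseteq> {0..<m} \<Longrightarrow> g ` pre B = B"
  unfolding preim_def using gS by force

lemma pre_part:
  assumes "partition_on {0..<m} s" shows "partition_on {0..<n} (pre ` s)"
proof (rule partition_onI)
  show "\<Union> (pre ` s) = {0..<n}"
  proof
    show "\<Union> (pre ` s) \<subseteq> {0..<n}" unfolding preim_def by auto
    show "{0..<n} \<subseteq> \<Union> (pre ` s)"
    proof
      fix k assume "k \<in> {0..<n}"
      hence "g k \<in> {0..<m}" using gM by auto
      then obtain B where "B \<in> s" "g k \<in> B" using assms unfolding partition_on_def by blast
      thus "k \<in> \<Union> (pre ` s)" using \<open>k \<in> {0..<n}\<close> unfolding preim_def by blast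
    qed
  qed
  show "{} \<notin> pre ` s"
  proof
    assume "{} \<in> pre ` s"
    then obtain B where "B \<in> s" "pre B = {}" by blast
    moreover have "B \<subseteq> {0..<m}" "B \<noteq> {}" using assms \<open>B \<in> s\<close> unfolding partition_on_def by auto
    ultimately show False using g_pre[of B] by simp
  qed
  fix p q assume "p \<in> pre ` s" "q \<in> pre ` s" "p \<noteq> q"
  then obtain B C where "B \<in> s" "C \<in> s" "p = pre B" "q = pre C" "B \<noteq> C" by blast
  hence "B \<inter> C = {}" using assms unfolding partition_on_def disjoint_def by blast
  thus "disjnt p q" unfolding \<open>p = pre B\<close> \<open>q = pre C\<close> preim_def disjnt_def by blast
qed

lemma pre_refines:
  assumes "partition_on {0..<m} s" "partition_on {0..<m} t"
  shows "refines (pre ` s) (pre ` t) \<longleftrightarrow> refines s t"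
proof
  assume st: "refines s t"
  show "refines (pre ` s) (pre ` t)" unfolding refines_def
  proof
    fix D assume "D \<in> pre ` s"
    then obtain B where "B \<in> s" "D = pre B" by blast
    then obtain C where "C \<in> t" "B \<subseteq> C" using st unfolding refines_def by blast
    hence "pre B \<subseteq> pre C" unfolding preim_def by auto
    thus "\<exists>C\<in>pre ` t. D \<subseteq> C" using \<open>C \<in> t\<close> \<open>D = pre B\<close> by blast
  qed
next
  assume h: "refines (pre ` s) (pre ` t)"
  show "refines s t" unfolding refines_def
  proof
    fix B assume "B \<in> s"
    then obtain C where "C \<in> t" "pre B \<subseteq> pre C" using h unfolding refines_def by blast
    hence "g ` pre B \<subseteq> g ` pre C" by blast
    moreover have "B \<subseteq> {0..<m}" "C \<subseteq> {0..<m}" using assms \<open>B \<in> s\<close> \<open>C \<in> t\<close>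
      unfolding partition_on_def by auto
    ultimately have "B \<subseteq> C" using g_pre by simp
    thus "\<exists>C\<in>t. B \<subseteq> C" using \<open>C \<in> t\<close> by blast
  qed
qed

lemma pre_inj:
  assumes "partition_on {0..<m} s" "partition_on {0..<m} t" "pre ` s = pre ` t"
  shows "s = t"
proof -
  have "refines (pre ` s) (pre ` t)" "refines (pre ` t) (pre ` s)"
    using assms(3) refines_refl by metis+
  hence "refines s t" "refines t s" using pre_refines[OF assms(1,2)] pre_refines[OF assms(2,1)] by blast+
  thus ?thesis by (rule part_antisym[OF assms(1,2)])
qed

lemma Z_below:
  assumes "partition_on {0..<m} s"
  shows "refines (pre ` hat0 m) (pre ` s)"
  unfolding refines_def hat0_def
proof
  fix D assume "D \<in> pre ` (\<lambda>i. {i}) ` {0..<m}"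
  then obtain i where i: "i < m" "D = pre {i}" by auto
  hence "i \<in> \<Union>s" using partition_onD1[OF assms] by auto
  then obtain B where "B \<in> s" "i \<in> B" by blast
  hence "pre {i} \<subseteq> pre B" unfolding preim_def by auto
  thus "\<exists>C\<in>pre ` s. D \<subseteq> C" using i \<open>B \<in> s\<close> by blast
qed

lemma Z_part: "partition_on {0..<n} (pre ` hat0 m)"
proof -
  have "partition_on {0..<m} (hat0 m)"
  proof (rule partition_onI)
    show "\<Union> (hat0 m) = {0..<m}" unfolding hat0_def by auto
    show "{} \<notin> hat0 m" unfolding hat0_def by auto
    fix p q assume "p \<in> hat0 m" "q \<in> hat0 m" "p \<noteq> q"
    thus "disjnt p q" unfolding hat0_def disjnt_def by auto
  qed
  thus ?thesis by (rule pre_part)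
qed

lemma above_Z:
  assumes r: "partition_on {0..<n} r" and Z: "refines (pre ` hat0 m) r"
  shows "partition_on {0..<m} ((\<lambda>C. g ` C) ` r) \<and> pre ` ((\<lambda>C. g ` C) ` r) = r"
proof -
  have preg: "pre (g ` C) = C" if "C \<in> r" for C
  proof
    have "C \<subseteq> {0..<n}" using r that unfolding partition_on_def by auto
    thus "C \<subseteq> pre (g ` C)" unfolding preim_def by auto
    show "pre (g ` C) \<subseteq> C"
    proof
      fix k assume "k \<in> pre (g ` C)"
      then obtain c where k: "k < n" "c \<in> C" "g k = g c" unfolding preim_def by auto
      have "g k < m" using gM k by blast
      hence "pre {g k} \<in> pre ` hat0 m" unfolding hat0_def by auto
      then obtain D where D: "D \<in> r" "pre {g k} \<subseteq> D" using Z unfolding refines_def by blast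
      have "c < n" using \<open>C \<subseteq> {0..<n}\<close> k by auto
      hence "c \<in> D" "k \<in> D" using D k unfolding preim_def by auto
      hence "D = C" using part_block_unique[OF r D(1) that] k by blast
      thus "k \<in> C" using \<open>k \<in> D\<close> by simp
    qed
  qed
  have "partition_on {0..<m} ((\<lambda>C. g ` C) ` r)"
  proof (rule partition_onI)
    show "\<Union> ((\<lambda>C. g ` C) ` r) = {0..<m}"
    proof
      show "\<Union> ((\<lambda>C. g ` C) ` r) \<subseteq> {0..<m}"
      proof
        fix i assume "i \<in> \<Union> ((\<lambda>C. g ` C) ` r)"
        then obtain C k where "C \<in> r" "k \<in> C" "i = g k" by blast
        hence "k < n" using r unfolding partition_on_def by auto
        thus "i \<in> {0..<m}" using gM \<open>i = g k\<close> by auto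
      qed
      show "{0..<m} \<subseteq> \<Union> ((\<lambda>C. g ` C) ` r)"
      proof
        fix i assume "i \<in> {0..<m}"
        then obtain k where "k < n" "g k = i" using gS by auto
        hence "k \<in> \<Union>r" using partition_onD1[OF r] by auto
        then obtain C where "C \<in> r" "k \<in> C" by blast
        thus "i \<in> \<Union> ((\<lambda>C. g ` C) ` r)" using \<open>g k = i\<close> by blast
      qed
    qed
    show "{} \<notin> (\<lambda>C. g ` C) ` r" using partition_onD3[OF r] by (auto simp: image_iff)
    fix p q assume "p \<in> (\<lambda>C. g ` C) ` r" "q \<in> (\<lambda>C. g ` C) ` r" "p \<noteq> q"
    then obtain C D where CD: "C \<in> r" "D \<in> r" "p = g ` C" "q = g ` D" "C \<noteq> D" by blast
    hence "C \<inter> D = {}" using r unfolding partition_on_def disjoint_def by blast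
    hence "pre (g ` C) \<inter> pre (g ` D) = {}" using preg CD by simp
    show "disjnt p q" unfolding disjnt_def
    proof (rule ccontr)
      assume "p \<inter> q \<noteq> {}"
      then obtain c d where cd: "c \<in> C" "d \<in> D" "g c = g d" using CD by auto
      have "c < n" using r CD(1) cd unfolding partition_on_def by auto
      hence "c \<in> pre (g ` C) \<inter> pre (g ` D)" using cd imageI[of d D g] imageI[of c C g] unfolding preim_def by auto
      thus False using \<open>pre (g ` C) \<inter> pre (g ` D) = {}\<close> by blast
    qed
  qed
  moreover have "pre ` ((\<lambda>C. g ` C) ` r) = r" using preg by (auto simp: image_image)
  ultimately show ?thesis by blast
qed

end


definition Pl :: "nat list \<Rightarrow> (nat \<times> nat) list" where
  "Pl ns = concat (map (\<lambda>i. map (\<lambda>j. (i, j)) [0..<ns ! i]) [0..<length ns])"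

lemma Pl_snoc: "Pl (ns @ [a]) = Pl ns @ map (\<lambda>j. (length ns, j)) [0..<a]"
proof -
  have "map (\<lambda>i. map (\<lambda>j. (i, j)) [0..<(ns @ [a]) ! i]) [0..<length ns] =
        map (\<lambda>i. map (\<lambda>j. (i, j)) [0..<ns ! i]) [0..<length ns]"
    by (rule map_cong) (auto simp: nth_append)
  show ?thesis unfolding Pl_def
    by simp (rule arg_cong[where f=concat], rule map_cong, auto simp: nth_append)
qed

lemma length_Pl: "length (Pl ns) = sum_list ns"
  by (induction ns rule: rev_induct) (auto simp: Pl_snoc, simp add: Pl_def)

lemma offset_snoc: "i \<le> length ns \<Longrightarrow> offset (ns @ [a]) i = offset ns i"
  unfolding offset_def by simp

lemma offset_le: "i < length ns \<Longrightarrow> offset ns i + ns ! i \<le> sum_list ns"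
proof -
  assume i: "i < length ns"
  have "offset ns i + ns ! i = sum_list (take (Suc i) ns)"
    unfolding offset_def using i by (simp add: take_Suc_conv_app_nth)
  also have "\<dots> \<le> sum_list (take (Suc i) ns) + sum_list (drop (Suc i) ns)" by simp
  also have "\<dots> = sum_list ns" by (metis append_take_drop_id sum_list_append)
  finally show ?thesis .
qed

lemma Pl_fst:
  "k < sum_list ns \<Longrightarrow>
   (fst (Pl ns ! k) = i) = (i < length ns \<and> offset ns i \<le> k \<and> k < offset ns i + ns ! i)"
proof (induction ns arbitrary: k i rule: rev_induct)
  case Nil thus ?case by simp
next
  case (snoc a ns)
  have off_m: "offset ns (length ns) = sum_list ns" unfolding offset_def by simp
  show ?case
  proof (cases "k < sum_list ns")
    case True
    hence "fst (Pl (ns @ [a]) ! k) = fst (Pl ns ! k)"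
      by (simp add: Pl_snoc nth_append length_Pl)
    moreover have "(i < length (ns @ [a]) \<and> offset (ns @ [a]) i \<le> k \<and> k < offset (ns @ [a]) i + (ns @ [a]) ! i)
       = (i < length ns \<and> offset ns i \<le> k \<and> k < offset ns i + ns ! i)"
    proof (cases "i < length ns")
      case True thus ?thesis by (simp add: offset_snoc nth_append)
    next
      case False
      thus ?thesis using \<open>k < sum_list ns\<close>
        by (auto simp: offset_snoc nth_append off_m less_Suc_eq)
    qed
    ultimately show ?thesis using snoc.IH[OF True] by simp
  next
    case False
    hence "fst (Pl (ns @ [a]) ! k) = length ns"
      using snoc.prems by (simp add: Pl_snoc nth_append length_Pl)
    moreover have "(i < length (ns @ [a]) \<and> offset (ns @ [a]) i \<le> k \<and> k < offset (ns @ [a]) i + (ns @ [a]) ! i)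
       = (i = length ns)"
    proof (cases "i < length ns")
      case True thus ?thesis using offset_le[OF True] False by (simp add: offset_snoc nth_append)
    next
      case False
      thus ?thesis using \<open>\<not> k < sum_list ns\<close> snoc.prems
        by (auto simp: offset_snoc nth_append off_m less_Suc_eq)
    qed
    ultimately show ?thesis by auto
  qed
qed

lemma Pl_surjmap:
  assumes "\<forall>i<length ns. ns ! i \<ge> 1"
  shows "surjmap (\<lambda>k. fst (Pl ns ! k)) (sum_list ns) (length ns)"
proof
  fix k assume "k < sum_list ns"
  thus "fst (Pl ns ! k) < length ns" using Pl_fst by blast
next
  fix i assume i: "i < length ns"
  have "offset ns i < sum_list ns" using offset_le[OF i] assms i by fastforce
  moreover have "fst (Pl ns ! offset ns i) = i" using Pl_fst[OF calculation] i assms by fastforce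
  ultimately show "\<exists>k<sum_list ns. fst (Pl ns ! k) = i" by blast
qed

lemma tilde_pre:
  assumes "\<forall>i<length ns. ns ! i \<ge> 1" "partition_on {0..<length ns} s"
  shows "tilde ns s = preim (\<lambda>k. fst (Pl ns ! k)) (sum_list ns) ` s"
proof -
  have "(\<Union>i\<in>B. {offset ns i..<offset ns i + ns ! i}) = preim (\<lambda>k. fst (Pl ns ! k)) (sum_list ns) B"
    if "B \<subseteq> {0..<length ns}" for B
  proof -
    have "k \<in> (\<Union>i\<in>B. {offset ns i..<offset ns i + ns ! i}) \<longleftrightarrow> k < sum_list ns \<and> fst (Pl ns ! k) \<in> B" for k
    proof
      assume "k \<in> (\<Union>i\<in>B. {offset ns i..<offset ns i + ns ! i})"
      then obtain i where i: "i \<in> B" "offset ns i \<le> k" "k < offset ns i + ns ! i" by auto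
      have "i < length ns" using that i by auto
      hence "k < sum_list ns" using offset_le i by fastforce
      thus "k < sum_list ns \<and> fst (Pl ns ! k) \<in> B" using Pl_fst[of k ns i] i \<open>i < length ns\<close> by auto
    next
      assume "k < sum_list ns \<and> fst (Pl ns ! k) \<in> B"
      thus "k \<in> (\<Union>i\<in>B. {offset ns i..<offset ns i + ns ! i})"
        using Pl_fst[of k ns "fst (Pl ns ! k)"] by force
    qed
    hence "\<And>k. k \<in> (\<Union>i\<in>B. {offset ns i..<offset ns i + ns ! i}) \<longleftrightarrow>
       k \<in> preim (\<lambda>k. fst (Pl ns ! k)) (sum_list ns) B"
      unfolding preim_def by (simp only: mem_Collect_eq atLeastLessThan_iff) simp
    thus ?thesis by blast
  qed
  moreover have "B \<subseteq> {0..<length ns}" if "B \<in> s" for B using assms(2) that unfolding partition_on_def by auto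
  ultimately show ?thesis unfolding tilde_def by (auto intro!: image_cong)
qed


lemma prod_list_concat': "prod_list (concat xss) = prod_list (map prod_list xss)"
  by (induction xss) simp_all

lemma bij_extend:
  fixes h :: "nat \<Rightarrow> nat"
  assumes fD: "finite D" and inj: "inj_on h D"
  shows "\<exists>s. bij s \<and> (\<forall>x\<in>D. s x = h x)"
proof -
  obtain N where N: "D \<union> h ` D \<subseteq> {..<N}"
    using fD finite_nat_set_iff_bounded[of "D \<union> h ` D"] by (auto simp: subset_iff)
  define A1 where "A1 = {..<N} - D"
  define A2 where "A2 = {..<N} - h ` D"
  have "card A1 = card A2" unfolding A1_def A2_def using N fD card_image[OF inj]
    by (simp add: card_Diff_subset)
  then obtain f where f: "bij_betw f A1 A2"
    using finite_same_card_bij[of A1 A2] unfolding A1_def A2_def by auto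
  define s where "s x = (if x \<in> D then h x else if x < N then f x else x)" for x
  have b1: "bij_betw s D (h ` D)"
    using inj unfolding s_def by (simp add: bij_betw_def inj_on_def image_def) 
  have b2: "bij_betw s A1 A2"
    using f by (rule bij_betw_cong[THEN iffD1, rotated]) (auto simp: s_def A1_def)
  have b3: "bij_betw s {N..} {N..}"
    using N by (auto simp: s_def bij_betw_def inj_on_def)
  have "bij_betw s (D \<union> A1 \<union> {N..}) (h ` D \<union> A2 \<union> {N..})"
    by (intro bij_betw_combine b1 b2 b3) (use N in \<open>auto simp: A2_def\<close>)
  moreover have "D \<union> A1 \<union> {N..} = UNIV" "h ` D \<union> A2 \<union> {N..} = UNIV"
    unfolding A1_def A2_def by auto
  ultimately have "bij s" by simp
  thus ?thesis unfolding s_def by auto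
qed

lemma bij_kernel:
  fixes f1 f2 :: "'x \<Rightarrow> nat"
  assumes fD: "finite D" and ker: "\<And>x y. x \<in> D \<Longrightarrow> y \<in> D \<Longrightarrow> f1 x = f1 y \<longleftrightarrow> f2 x = f2 y"
  shows "\<exists>s. bij s \<and> (\<forall>x\<in>D. s (f1 x) = f2 x)"
proof -
  define h where "h e = f2 (SOME x. x \<in> D \<and> f1 x = e)" for e
  have hx: "h (f1 x) = f2 x" if "x \<in> D" for x
  proof -
    have "\<exists>x'. x' \<in> D \<and> f1 x' = f1 x" using that by blast
    hence "(SOME x'. x' \<in> D \<and> f1 x' = f1 x) \<in> D \<and> f1 (SOME x'. x' \<in> D \<and> f1 x' = f1 x) = f1 x"
      by (rule someI_ex)
    thus ?thesis unfolding h_def using ker that by blast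
  qed
  have "inj_on h (f1 ` D)"
    unfolding inj_on_def using hx ker by auto
  then obtain s where "bij s" "\<forall>e\<in>f1 ` D. s e = h e" using bij_extend[OF finite_imageI[OF fD]] by blast
  thus ?thesis using hx by auto
qed

lemma part_label_block:
  assumes P: "partition_on A P" and fA: "finite A" and B: "B \<in> P" "x \<in> B"
  shows "part_label P x = Min B"
proof -
  have "{k. \<exists>B'\<in>P. x \<in> B' \<and> k \<in> B'} = B"
    using part_block_unique[OF P] B by blast
  thus ?thesis unfolding part_label_def by simp
qed

lemma part_label_eq:
  assumes P: "partition_on A P" and fA: "finite A" and xy: "x \<in> A" "y \<in> A"
  shows "part_label P x = part_label P y \<longleftrightarrow> (\<exists>B\<in>P. x \<in> B \<and> y \<in> B)"
proof -
  obtain Bx where Bx: "Bx \<in> P" "x \<in> Bx" using P xy partition_onD1 by blast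
  obtain By where By: "By \<in> P" "y \<in> By" using P xy partition_onD1 by blast
  have fin: "finite Bx" "finite By" "Bx \<noteq> {}" "By \<noteq> {}"
    using Bx By P fA unfolding partition_on_def by (auto intro: finite_subset)
  show ?thesis
  proof
    assume "part_label P x = part_label P y"
    hence "Min Bx = Min By" using part_label_block[OF P fA] Bx By by metis
    moreover have "Min Bx \<in> Bx" "Min By \<in> By" using fin by auto
    ultimately have "Bx = By" using part_block_unique[OF P Bx(1) By(1)] by simp
    thus "\<exists>B\<in>P. x \<in> B \<and> y \<in> B" using Bx By by blast
  next
    assume "\<exists>B\<in>P. x \<in> B \<and> y \<in> B"
    then obtain B where "B \<in> P" "x \<in> B" "y \<in> B" by blast
    thus "part_label P x = part_label P y" using part_label_block[OF P fA] by metis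
  qed
qed


lemma iota_prod: "alg_embedding sA sU f \<Longrightarrow> f (prod_list xs) = prod_list (map f xs)"
  by (induction xs) (simp_all add: alg_embedding_def)

lemma hat0_part: "partition_on {0..<m} (hat0 m)"
proof (rule partition_onI)
  show "\<Union> (hat0 m) = {0..<m}" unfolding hat0_def by auto
  show "{} \<notin> hat0 m" unfolding hat0_def by auto
  fix p q assume "p \<in> hat0 m" "q \<in> hat0 m" "p \<noteq> q"
  thus "disjnt p q" unfolding hat0_def disjnt_def by auto
qed

lemma F_eq: "concat (map (\<lambda>i. map (X i) [0..<ns ! i]) [0..<length ns]) = map (\<lambda>(i, j). X i j) (Pl ns)"
  unfolding Pl_def by (simp add: map_concat o_def)

lemma phi_tilde:
  assumes exch: "exch_system sA phi sU phit iota" and ns1: "\<forall>i<length ns. ns ! i \<ge> 1"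
    and sig: "partition_on {0..<length ns} sig"
  shows "phi_part phit iota sig (map (\<lambda>i. prod_list (map (X i) [0..<ns ! i])) [0..<length ns]) =
    phi_part phit iota (preim (\<lambda>k. fst (Pl ns ! k)) (sum_list ns) ` sig)
      (concat (map (\<lambda>i. map (X i) [0..<ns ! i]) [0..<length ns]))"
proof -
  define G where "G = (\<lambda>k. fst (Pl ns ! k))"
  define m where "m = length ns"
  define n where "n = sum_list ns"
  define Y where "Y = map (\<lambda>i. prod_list (map (X i) [0..<ns ! i])) [0..<length ns]"
  define F where "F = concat (map (\<lambda>i. map (X i) [0..<ns ! i]) [0..<length ns])"
  define lab where "lab = part_label sig"
  define lab' where "lab' = part_label (preim G n ` sig)"
  interpret sm: surjmap G n m unfolding G_def n_def m_def by (rule Pl_surjmap[OF ns1])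
  have emb: "\<And>k. alg_embedding sA sU (iota k)" using exch unfolding exch_system_def by blast
  have Feq: "F = map (\<lambda>(i, j). X i j) (Pl ns)" unfolding F_def by (rule F_eq)
  have lenF: "length F = n" unfolding Feq n_def by (simp add: length_Pl)
  have lenY: "length Y = m" unfolding Y_def m_def by simp
  have L: "prod_list (map (\<lambda>j. iota (lab j) (Y ! j)) [0..<length Y]) =
      prod_list (map (\<lambda>(i, j). iota (lab i) (X i j)) (Pl ns))"
  proof -
    have "map (\<lambda>j. iota (lab j) (Y ! j)) [0..<length Y] =
        map (\<lambda>i. prod_list (map (\<lambda>j. iota (lab i) (X i j)) [0..<ns ! i])) [0..<length ns]"
      unfolding lenY m_def by (rule map_cong) (auto simp: Y_def iota_prod[OF emb] o_def)
    thus ?thesis unfolding Pl_def by (simp add: prod_list_concat' map_concat o_def)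
  qed
  define "is" where "is = map (\<lambda>k. lab (G k)) [0..<n]"
  have M: "map (\<lambda>(i, j). iota (lab i) (X i j)) (Pl ns) = map (\<lambda>k. iota (is ! k) (F ! k)) [0..<length F]"
  proof (rule nth_equalityI)
    show "length (map (\<lambda>(i, j). iota (lab i) (X i j)) (Pl ns)) = length (map (\<lambda>k. iota (is ! k) (F ! k)) [0..<length F])"
      using lenF by (simp add: length_Pl n_def)
    fix k assume "k < length (map (\<lambda>(i, j). iota (lab i) (X i j)) (Pl ns))"
    hence k: "k < n" by (simp add: length_Pl n_def)
    show "map (\<lambda>(i, j). iota (lab i) (X i j)) (Pl ns) ! k = map (\<lambda>k. iota (is ! k) (F ! k)) [0..<length F] ! k"
      using k lenF unfolding is_def Feq G_def by (simp add: length_Pl n_def split: prod.splits)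
  qed
  have ker: "lab (G k) = lab (G k') \<longleftrightarrow> lab' k = lab' k'" if "k \<in> {0..<n}" "k' \<in> {0..<n}" for k k'
  proof -
    have g: "G k \<in> {0..<m}" "G k' \<in> {0..<m}" using that sm.gM by auto
    have "lab (G k) = lab (G k') \<longleftrightarrow> (\<exists>B\<in>sig. G k \<in> B \<and> G k' \<in> B)"
      unfolding lab_def using part_label_eq[OF sig[folded m_def] _ g] by simp
    also have "\<dots> \<longleftrightarrow> (\<exists>C\<in>preim G n ` sig. k \<in> C \<and> k' \<in> C)"
      using that unfolding preim_def by auto
    also have "\<dots> \<longleftrightarrow> lab' k = lab' k'"
      unfolding lab'_def using part_label_eq[OF sm.pre_part[OF sig[folded m_def]] _ that] by simp
    finally show ?thesis .
  qed
  obtain s where s: "bij s" "\<forall>k\<in>{0..<n}. s (lab (G k)) = lab' k"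
    using bij_kernel[of "{0..<n}" "\<lambda>k. lab (G k)" lab'] ker by auto
  have lenis: "length is = length F" unfolding is_def lenF by simp
  have ex: "phit (prod_list (map (\<lambda>j. iota (is ! j) (F ! j)) [0..<length F])) =
        phit (prod_list (map (\<lambda>j. iota (s (is ! j)) (F ! j)) [0..<length F]))"
    using exch lenis s(1) unfolding exch_system_def by blast
  have R: "map (\<lambda>j. iota (s (is ! j)) (F ! j)) [0..<length F] = map (\<lambda>j. iota (lab' j) (F ! j)) [0..<length F]"
    by (rule map_cong) (use s(2) lenF in \<open>auto simp: is_def\<close>)
  show ?thesis
    unfolding phi_part_def Y_def[symmetric] F_def[symmetric] lab_def[symmetric] G_def[symmetric]
      n_def[symmetric] lab'_def[symmetric]
    using L M ex R by simp
qed


theorem proposition3p4: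
  fixes sA :: "complex \<Rightarrow> 'a::ring_1 \<Rightarrow> 'a" and phi :: "'a \<Rightarrow> complex"
    and sU :: "complex \<Rightarrow> 'u::ring_1 \<Rightarrow> 'u" and phit :: "'u \<Rightarrow> complex"
    and iota :: "nat \<Rightarrow> 'a \<Rightarrow> 'u"
    and m :: nat and ns :: "nat list" and X :: "nat \<Rightarrow> nat \<Rightarrow> 'a" and p :: "nat set set"
  assumes "exch_system sA phi sU phit iota"
    and "length ns = m"
    and "\<forall>i<m. ns ! i \<ge> 1"
    and "p \<in> Pi_part m"
  shows "K_part phit iota p (map (\<lambda>i. prod_list (map (X i) [0..<ns ! i])) [0..<m]) =
    (\<Sum>s\<in>{s\<in>Pi_part (sum_list ns). join_part (sum_list ns) s (tilde ns (hat0 m)) = tilde ns p}.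
        K_part phit iota s (concat (map (\<lambda>i. map (X i) [0..<ns ! i]) [0..<m])))"
proof -
  note exch = assms(1)
  have ns1: "\<forall>i<length ns. ns ! i \<ge> 1" using assms(2,3) by simp
  define G where "G = (\<lambda>k. fst (Pl ns ! k))"
  define n where "n = sum_list ns"
  define Y where "Y = map (\<lambda>i. prod_list (map (X i) [0..<ns ! i])) [0..<m]"
  define F where "F = concat (map (\<lambda>i. map (X i) [0..<ns ! i]) [0..<m])"
  define Z where "Z = tilde ns (hat0 m)"
  define J where "J t = join_part n t Z" for t
  define Gs where "Gs sig = (\<Sum>t\<in>{t\<in>Pi_part n. J t = tilde ns sig}. K_part phit iota t F)" for sig
  interpret sm: surjmap G n m unfolding G_def n_def using Pl_surjmap[OF ns1] assms(2) by simp
  have lenF: "length F = n" unfolding F_def n_def using F_eq[of X ns] assms(2) by (simp add: length_Pl)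
  have lenY: "length Y = m" unfolding Y_def by simp
  have PiM: "sig \<in> Pi_part m \<longleftrightarrow> partition_on {0..<m} sig" for sig unfolding Pi_part_def by simp
  have PiN: "t \<in> Pi_part n \<longleftrightarrow> partition_on {0..<n} t" for t unfolding Pi_part_def by simp
  have tl: "tilde ns sig = preim G n ` sig" if "partition_on {0..<m} sig" for sig
    unfolding G_def n_def using tilde_pre[OF ns1] that assms(2) by simp
  have Zeq: "Z = preim G n ` hat0 m" unfolding Z_def using tl[OF hat0_part] .
  have ZN: "Z \<in> Pi_part n" unfolding PiN Zeq by (rule sm.Z_part)
  have key: "(\<Sum>sig\<in>{sig\<in>Pi_part m. refines sig pi}. K_part phit iota sig Y) =
      (\<Sum>sig\<in>{sig\<in>Pi_part m. refines sig pi}. Gs sig)" if pi: "pi \<in> Pi_part m" for pi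
  proof -
    define D where "D = {sig\<in>Pi_part m. refines sig pi}"
    define T where "T = {t\<in>Pi_part n. refines t (tilde ns pi)}"
    have fD: "finite D" unfolding D_def using finite_Pi_part by auto
    have fT: "finite T" unfolding T_def using finite_Pi_part by auto
    have piP: "partition_on {0..<m} pi" using pi PiM by simp
    have "(\<Sum>sig\<in>D. K_part phit iota sig Y) = phi_part phit iota pi Y"
      unfolding D_def using phi_inv[of pi Y] pi lenY by simp
    also have "\<dots> = phi_part phit iota (tilde ns pi) F"
      unfolding Y_def F_def tl[OF piP] G_def n_def using phi_tilde[OF exch ns1, of pi X] assms(2) piP by simp
    also have "\<dots> = (\<Sum>t\<in>T. K_part phit iota t F)"
    proof -
      have "tilde ns pi \<in> Pi_part (length F)" unfolding lenF PiN tl[OF piP] by (rule sm.pre_part[OF piP])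
      hence "tilde ns pi \<in> Pi_part (length F)" .
      from phi_inv[OF this, where phit=phit and iota=iota]
      show ?thesis unfolding T_def lenF by simp
    qed
    also have "\<dots> = (\<Sum>t\<in>T. \<Sum>sig\<in>{sig\<in>D. J t = tilde ns sig}. K_part phit iota t F)"
    proof (rule sum.cong[OF refl])
      fix t assume "t \<in> T"
      hence tN: "t \<in> Pi_part n" and tpi: "refines t (tilde ns pi)" unfolding T_def by auto
      note jp = join_part_props[OF tN ZN, folded J_def]
      have JP: "partition_on {0..<n} (J t)" using jp PiN by blast
      have ZJ: "refines (preim G n ` hat0 m) (J t)" using jp Zeq by blast
      define s0 where "s0 = (\<lambda>C. G ` C) ` J t"
      have s0: "partition_on {0..<m} s0" "preim G n ` s0 = J t"
        using sm.above_Z[OF JP ZJ] unfolding s0_def by auto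
      have "refines (J t) (tilde ns pi)"
        using jp tpi sm.Z_below[OF piP] tl[OF piP] Zeq sm.pre_part[OF piP] PiN by metis
      hence "refines s0 pi" using sm.pre_refines[OF s0(1) piP] s0(2) tl[OF piP] by simp
      hence s0D: "s0 \<in> D" unfolding D_def using s0(1) PiM by simp
      have "{sig\<in>D. J t = tilde ns sig} = {s0}"
      proof
        show "{s0} \<subseteq> {sig\<in>D. J t = tilde ns sig}" using s0D s0 tl by simp
        show "{sig\<in>D. J t = tilde ns sig} \<subseteq> {s0}"
        proof
          fix sig assume "sig \<in> {sig\<in>D. J t = tilde ns sig}"
          hence sg: "partition_on {0..<m} sig" "J t = preim G n ` sig"
            unfolding D_def using PiM tl by auto
          hence "sig = s0" using sm.pre_inj[OF sg(1) s0(1)] s0(2) by simp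
          thus "sig \<in> {s0}" by simp
        qed
      qed
      thus "K_part phit iota t F = (\<Sum>sig\<in>{sig\<in>D. J t = tilde ns sig}. K_part phit iota t F)" by simp
    qed
    also have "\<dots> = (\<Sum>sig\<in>D. \<Sum>t\<in>{t\<in>T. J t = tilde ns sig}. K_part phit iota t F)"
      by (rule sum.swap_restrict[OF fT fD])
    also have "\<dots> = (\<Sum>sig\<in>D. Gs sig)"
    proof (rule sum.cong[OF refl])
      fix sig assume "sig \<in> D"
      hence sg: "partition_on {0..<m} sig" "refines sig pi" unfolding D_def PiM by auto
      have "{t\<in>T. J t = tilde ns sig} = {t\<in>Pi_part n. J t = tilde ns sig}"
      proof (rule Collect_cong, rule iffI)
        fix t assume "t \<in> Pi_part n \<and> J t = tilde ns sig"
        hence tN: "t \<in> Pi_part n" and Jt: "J t = tilde ns sig" by auto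
        note jp = join_part_props[OF tN ZN, folded J_def]
        have "refines (tilde ns sig) (tilde ns pi)"
          unfolding tl[OF sg(1)] tl[OF piP] using sm.pre_refines[OF sg(1) piP] sg(2) by simp
        hence "refines t (tilde ns pi)" using jp Jt refines_trans by metis
        thus "t \<in> T \<and> J t = tilde ns sig" unfolding T_def using tN Jt by simp
      qed (simp add: T_def)
      thus "(\<Sum>t\<in>{t\<in>T. J t = tilde ns sig}. K_part phit iota t F) = Gs sig" unfolding Gs_def by simp
    qed
    finally show ?thesis unfolding D_def .
  qed
  have "K_part phit iota p Y = Gs p"
    by (rule down_unique[where N = m]) (use key assms(4) in auto)
  thus ?thesis unfolding Gs_def J_def Z_def n_def Y_def F_def .
qed

end
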